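(* 1. $\nu_+$ does not satisfy $\mathrm{IC}(1)$. 2. $\nu$ does not satisfy $\mathrm{IC}(1)$.
   Context: $\nu_+$ has density $e^{-x}\mathbb{I}_{[0,\infty)}(x)$ and $\nu$ has density $\frac12 e^{-|x|}$. A pair $(\mu,W)$, with $\mu$ a probability measure on $\mathbb{R}^n$ and $W:\mathbb{R}^n\to[0,\infty]$, satisfies property $(\tau)$ if for every bounded function $f$, $\int e^{h}\,d\mu\int e^{-f}\,d\mu\le 1$, where $h(x)=\inf_{y}\{W(x-y)+f(y)\}$ is the infimum convolution of $W$ and $f$. For a measure $\mu$, $\mu'$ is its reflection through the origin, $\overline{\mu}=\mu*\mu'$, $\Lambda_\mu=\ln\int e^{\langle \cdot,y\rangle}d\mu(y)$, and $\Lambda^*_\mu(x)=\sup_y\{\langle x,y\rangle-\Lambda_\mu(y)\}$. A probability measure $\mu$ satisfies $\mathrm{IC}(\beta)$ ($\beta>0$) if the pair $(\mu,\Lambda^*_{\overline{\mu}}(\cdot/\beta))$ satisfies property $(\tau)$. *)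

theory Defs
  imports "HOL-Probability.Probability"
begin

definition exp_ereal :: "ereal \<Rightarrow> ennreal" where
  "exp_ereal t = (if t = \<infinity> then \<infinity> else if t = - \<infinity> then 0 else ennreal (exp (real_of_ereal t)))"

definition ln_ennreal :: "ennreal \<Rightarrow> ereal" where
  "ln_ennreal z = (if z = \<infinity> then \<infinity> else if z = 0 then - \<infinity> else ereal (ln (enn2real z)))"

definition inf_conv :: "('a::real_vector \<Rightarrow> ereal) \<Rightarrow> ('a \<Rightarrow> real) \<Rightarrow> 'a \<Rightarrow> ereal" where
  "inf_conv W f x = (INF y. W (x - y) + ereal (f y))"

definition property_tau :: "('a::euclidean_space) measure \<Rightarrow> ('a \<Rightarrow> ereal) \<Rightarrow> bool" where
  "property_tau \<mu> W \<longleftrightarrow>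
     (\<forall>f :: 'a \<Rightarrow> real. f \<in> borel_measurable borel \<and> bounded (range f) \<longrightarrow>
        (\<integral>\<^sup>+ x. exp_ereal (inf_conv W f x) \<partial>\<mu>) * (\<integral>\<^sup>+ x. ennreal (exp (- f x)) \<partial>\<mu>) \<le> 1)"

definition reflect_measure :: "('a::euclidean_space) measure \<Rightarrow> 'a measure" where
  "reflect_measure \<mu> = distr \<mu> borel uminus"

definition symmetrize :: "('a::ordered_euclidean_space) measure \<Rightarrow> 'a measure" where
  "symmetrize \<mu> = convolution \<mu> (reflect_measure \<mu>)"

definition log_laplace :: "('a::euclidean_space) measure \<Rightarrow> 'a \<Rightarrow> ereal" where
  "log_laplace \<mu> y = ln_ennreal (\<integral>\<^sup>+ x. ennreal (exp (inner x y)) \<partial>\<mu>)"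

definition cramer :: "('a::euclidean_space) measure \<Rightarrow> 'a \<Rightarrow> ereal" where
  "cramer \<mu> x = (SUP y. ereal (inner x y) - log_laplace \<mu> y)"

definition IC :: "('a::ordered_euclidean_space) measure \<Rightarrow> real \<Rightarrow> bool" where
  "IC \<mu> \<beta> \<longleftrightarrow> property_tau \<mu> (\<lambda>x. cramer (symmetrize \<mu>) (x /\<^sub>R \<beta>))"

definition nu_plus :: "real measure" where
  "nu_plus = density lborel (\<lambda>x. ennreal (exp (- x) * indicator {0..} x))"

definition nu_sym :: "real measure" where
  "nu_sym = density lborel (\<lambda>x. ennreal (exp (- \<bar>x\<bar>) / 2))"

end

theory Submission
  imports Defs
begin


lemma exp_piece_Icc:
  fixes r d p q :: real
  assumes "r > 0" "p \<le> q"
  shows "(\<integral>\<^sup>+u. ennreal (exp (d - r*u)) * indicator {p..q} u \<partial>lborel) = ennreal ((exp (d - r*p) - exp (d - r*q))/r)"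
proof -
  have "(\<integral>\<^sup>+u. ennreal (exp (d - r*u)) * indicator {p..q} u \<partial>lborel) = (- exp (d - r*q)/r) - (- exp (d - r*p)/r)"
    by (rule nn_integral_FTC_Icc) (use assms in \<open>auto intro!: derivative_eq_intros\<close>)
  then show ?thesis by (simp add: diff_divide_distrib)
qed

lemma exp_piece_Ico:
  fixes r d p q :: real
  assumes "r > 0" "p \<le> q"
  shows "(\<integral>\<^sup>+u. ennreal (exp (d - r*u)) * indicator {p..<q} u \<partial>lborel) = ennreal ((exp (d - r*p) - exp (d - r*q))/r)"
proof -
  have "(\<integral>\<^sup>+u. ennreal (exp (d - r*u)) * indicator {p..<q} u \<partial>lborel) = (\<integral>\<^sup>+u. ennreal (exp (d - r*u)) * indicator {p..q} u \<partial>lborel)"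
    by (rule nn_integral_cong_AE) (use AE_lborel_singleton[of q] in \<open>auto split: split_indicator\<close>)
  then show ?thesis using exp_piece_Icc[OF assms] by simp
qed

lemma exp_tail:
  fixes r d p :: real
  assumes "r > 0"
  shows "(\<integral>\<^sup>+u. ennreal (exp (d - r*u)) * indicator {p..} u \<partial>lborel) = ennreal (exp (d - r*p)/r)"
proof -
  have "(\<integral>\<^sup>+u. ennreal (exp (d - r*u)) * indicator {p..} u \<partial>lborel) = 0 - (- exp (d - r*p)/r)"
  proof (rule nn_integral_FTC_atLeast)
    have L: "((\<lambda>u. exp (- (r*u))) \<longlongrightarrow> 0) at_top"
      by (rule filterlim_compose[OF exp_at_bot], rule filterlim_compose[OF filterlim_uminus_at_bot_at_top],
          rule filterlim_tendsto_pos_mult_at_top[OF tendsto_const assms filterlim_ident])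
    have "((\<lambda>u. - (exp d * exp (- (r*u)))/r) \<longlongrightarrow> - (exp d * 0)/r) at_top"
      using assms by (intro tendsto_intros L) auto
    moreover have "\<And>u. exp d * exp (- (r*u)) = exp (d - r*u)" by (simp add: mult_exp_exp)
    ultimately have "((\<lambda>u. - exp (d - r*u)/r) \<longlongrightarrow> - 0 / r) at_top" by simp
    then show "((\<lambda>u. - exp (d - r*u)/r) \<longlongrightarrow> 0) at_top" by simp
  qed (use assms in \<open>auto intro!: derivative_eq_intros\<close>)
  then show ?thesis by simp
qed

lemma lborel_split:
  fixes g :: "real \<Rightarrow> ennreal"
  assumes [measurable]: "g \<in> borel_measurable borel"
  shows "(\<integral>\<^sup>+x. g x \<partial>lborel) = (\<integral>\<^sup>+x. (g x + g (-x)) * indicator {0..} x \<partial>lborel)"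
proof -
  have "(\<integral>\<^sup>+x. g x \<partial>lborel) = (\<integral>\<^sup>+x. g x * indicator {0..} x + g x * indicator {..<0} x \<partial>lborel)"
    by (intro nn_integral_cong) (auto split: split_indicator)
  also have "\<dots> = (\<integral>\<^sup>+x. g x * indicator {0..} x \<partial>lborel) + (\<integral>\<^sup>+x. g x * indicator {..<0} x \<partial>lborel)"
    by (intro nn_integral_add) auto
  also have "(\<integral>\<^sup>+x. g x * indicator {..<0} x \<partial>lborel) = (\<integral>\<^sup>+x. g x * indicator {..<0} x \<partial>distr lborel borel uminus)"
    by (simp add: lborel_distr_uminus)
  also have "\<dots> = (\<integral>\<^sup>+x. g (-x) * indicator {..<0} (-x) \<partial>lborel)"
    by (subst nn_integral_distr) auto
  also have "\<dots> = (\<integral>\<^sup>+x. g (-x) * indicator {0..} x \<partial>lborel)"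
    by (rule nn_integral_cong_AE) (use AE_lborel_singleton[of 0] in \<open>auto split: split_indicator\<close>)
  also have "(\<integral>\<^sup>+x. g x * indicator {0..} x \<partial>lborel) + \<dots> = (\<integral>\<^sup>+x. g x * indicator {0..} x + g (-x) * indicator {0..} x \<partial>lborel)"
    by (intro nn_integral_add[symmetric]) auto
  finally show ?thesis by (simp add: distrib_right)
qed



lemma sets_nu_plus[simp, measurable_cong]: "sets nu_plus = sets borel"
  by (simp add: nu_plus_def)
lemma sets_nu_sym[simp, measurable_cong]: "sets nu_sym = sets borel"
  by (simp add: nu_sym_def)

lemma half_ennreal: "0 \<le> x \<Longrightarrow> ennreal (x / 2) = inverse 2 * ennreal x"
  by (metis ennreal_divide_numeral divide_ennreal_def mult.commute)

lemma ennreal_half2: "ennreal (x / 2) * 2 = ennreal x" if "0 \<le> x" for x :: real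
proof -
  have "ennreal (x / 2) * 2 = ennreal (x / 2) * ennreal 2" by simp
  also have "\<dots> = ennreal (x / 2 * 2)" using ennreal_mult[of "x/2" 2] that by simp
  finally show ?thesis by simp
qed

lemma nu_plus_abs:
  fixes G :: "real \<Rightarrow> ennreal"
  assumes [measurable]: "G \<in> borel_measurable borel"
  shows "(\<integral>\<^sup>+x. G \<bar>x\<bar> \<partial>nu_plus) = (\<integral>\<^sup>+u. ennreal (exp (- u)) * indicator {0..} u * G u \<partial>lborel)"
  unfolding nu_plus_def
  by (subst nn_integral_density) (auto intro!: nn_integral_cong simp: ennreal_mult' split: split_indicator)

lemma nu_sym_int:
  fixes F :: "real \<Rightarrow> ennreal"
  assumes [measurable]: "F \<in> borel_measurable borel"
  shows "(\<integral>\<^sup>+x. F x \<partial>nu_sym) = (\<integral>\<^sup>+u. ennreal (exp (- u) / 2) * (F u + F (-u)) * indicator {0..} u \<partial>lborel)"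
proof -
  have "(\<integral>\<^sup>+x. F x \<partial>nu_sym) = (\<integral>\<^sup>+x. ennreal (exp (- \<bar>x\<bar>) / 2) * F x \<partial>lborel)"
    unfolding nu_sym_def by (subst nn_integral_density) auto
  also have "\<dots> = (\<integral>\<^sup>+u. (ennreal (exp (- \<bar>u\<bar>) / 2) * F u + ennreal (exp (- \<bar>-u\<bar>) / 2) * F (-u)) * indicator {0..} u \<partial>lborel)"
    by (rule lborel_split) auto
  also have "\<dots> = (\<integral>\<^sup>+u. ennreal (exp (- u) / 2) * (F u + F (-u)) * indicator {0..} u \<partial>lborel)"
    by (intro nn_integral_cong) (auto simp: distrib_left split: split_indicator)
  finally show ?thesis .
qed

lemma nu_sym_abs:
  fixes G :: "real \<Rightarrow> ennreal"
  assumes [measurable]: "G \<in> borel_measurable borel"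
  shows "(\<integral>\<^sup>+x. G \<bar>x\<bar> \<partial>nu_sym) = (\<integral>\<^sup>+u. ennreal (exp (- u)) * indicator {0..} u * G u \<partial>lborel)"
proof -
  have "(\<integral>\<^sup>+x. G \<bar>x\<bar> \<partial>nu_sym) = (\<integral>\<^sup>+u. ennreal (exp (- u) / 2) * (G \<bar>u\<bar> + G \<bar>-u\<bar>) * indicator {0..} u \<partial>lborel)"
    by (rule nu_sym_int) auto
  also have "\<dots> = (\<integral>\<^sup>+u. ennreal (exp (- u)) * indicator {0..} u * G u \<partial>lborel)"
  proof (intro nn_integral_cong)
    fix u :: real
    have "ennreal (exp (- u) / 2) * (G u + G u) = ennreal (exp (- u) / 2) * 2 * G u"
      by (simp add: mult_2 distrib_left mult.assoc)
    also have "\<dots> = ennreal (exp (- u)) * G u"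
      by (simp add: ennreal_half2)
    finally show "ennreal (exp (- u) / 2) * (G \<bar>u\<bar> + G \<bar>-u\<bar>) * indicator {0..} u = ennreal (exp (- u)) * indicator {0..} u * G u"
      by (auto split: split_indicator)
  qed
  finally show ?thesis .
qed

lemma lap_nu_plus:
  fixes t :: real assumes "t < 1"
  shows "(\<integral>\<^sup>+x. ennreal (exp (x * t)) \<partial>nu_plus) = ennreal (1 / (1 - t))"
proof -
  have "(\<integral>\<^sup>+x. ennreal (exp (x * t)) \<partial>nu_plus) = (\<integral>\<^sup>+x. ennreal (exp (0 - (1 - t) * x)) * indicator {0..} x \<partial>lborel)"
    unfolding nu_plus_def
    by (subst nn_integral_density) (auto intro!: nn_integral_cong simp: ennreal_mult'[symmetric] mult_exp_exp algebra_simps split: split_indicator)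
  also have "\<dots> = ennreal (1 / (1 - t))"
    using assms by (subst exp_tail) auto
  finally show ?thesis .
qed

lemma exp_half_mult: "ennreal (exp a / 2) * ennreal (exp b) = ennreal (exp (- ln 2 - (- (a + b))))"
proof -
  have "ennreal (exp a / 2) * ennreal (exp b) = ennreal (exp a / 2 * exp b)"
    by (rule ennreal_mult'[symmetric]) simp
  also have "exp a / 2 * exp b = exp (- ln 2 - (- (a + b)))"
    by (simp add: exp_diff exp_minus mult_exp_exp[symmetric] field_simps)
  finally show ?thesis .
qed

lemma lap_nu_sym:
  fixes t :: real assumes "\<bar>t\<bar> < 1"
  shows "(\<integral>\<^sup>+x. ennreal (exp (x * t)) \<partial>nu_sym) = ennreal (1 / (1 - t\<^sup>2))"
proof -
  have "(\<integral>\<^sup>+x. ennreal (exp (x * t)) \<partial>nu_sym) = (\<integral>\<^sup>+u. ennreal (exp (- u) / 2) * (ennreal (exp (u * t)) + ennreal (exp (- u * t))) * indicator {0..} u \<partial>lborel)"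
    by (subst nu_sym_int) auto
  also have "\<dots> = (\<integral>\<^sup>+u. ennreal (exp (- ln 2 - (1 - t) * u)) * indicator {0..} u + ennreal (exp (- ln 2 - (1 + t) * u)) * indicator {0..} u \<partial>lborel)"
  proof (intro nn_integral_cong)
    fix u :: real
    have "ennreal (exp (- u) / 2) * (ennreal (exp (u * t)) + ennreal (exp (- u * t))) =
       ennreal (exp (- u) / 2) * ennreal (exp (u * t)) + ennreal (exp (- u) / 2) * ennreal (exp (- u * t))"
      by (simp add: distrib_left)
    also have "\<dots> = ennreal (exp (- ln 2 - (1 - t) * u)) + ennreal (exp (- ln 2 - (1 + t) * u))"
      unfolding exp_half_mult by (simp add: algebra_simps)
    finally show "ennreal (exp (- u) / 2) * (ennreal (exp (u * t)) + ennreal (exp (- u * t))) * indicator {0..} u =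
       ennreal (exp (- ln 2 - (1 - t) * u)) * indicator {0..} u + ennreal (exp (- ln 2 - (1 + t) * u)) * indicator {0..} u"
      by (simp add: distrib_right)
  qed
  also have "\<dots> = (\<integral>\<^sup>+u. ennreal (exp (- ln 2 - (1 - t) * u)) * indicator {0..} u \<partial>lborel) + (\<integral>\<^sup>+u. ennreal (exp (- ln 2 - (1 + t) * u)) * indicator {0..} u \<partial>lborel)"
    by (subst nn_integral_add) auto
  also have "\<dots> = ennreal (exp (- ln 2 - (1 - t) * 0) / (1 - t)) + ennreal (exp (- ln 2 - (1 + t) * 0) / (1 + t))"
    using assms by (subst (1 2) exp_tail) auto
  also have "\<dots> = ennreal (1/2 * (1 / (1 - t)) + 1/2 * (1 / (1 + t)))"
    using assms by (simp add: ennreal_plus[symmetric] exp_minus del: ennreal_plus)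
  also have "1/2 * (1 / (1 - t)) + 1/2 * (1 / (1 + t)) = 1 / (1 - t\<^sup>2)"
  proof -
    have "1 - t \<noteq> 0" "1 + t \<noteq> 0" "1 - t\<^sup>2 \<noteq> 0" using assms abs_square_less_1[of t] by auto
    then show ?thesis by (simp add: field_simps power2_eq_square)
  qed
  finally show ?thesis .
qed

lemma finite_nu_plus: "finite_measure nu_plus"
proof (rule finite_measureI)
  have "(\<integral>\<^sup>+x. ennreal (exp (x * 0)) \<partial>nu_plus) = emeasure nu_plus (space nu_plus)"
    by simp
  then show "emeasure nu_plus (space nu_plus) \<noteq> \<infinity>" using lap_nu_plus[of 0] by simp
qed

lemma finite_nu_sym: "finite_measure nu_sym"
proof (rule finite_measureI)
  have "(\<integral>\<^sup>+x. ennreal (exp (x * 0)) \<partial>nu_sym) = emeasure nu_sym (space nu_sym)"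
    by simp
  then show "emeasure nu_sym (space nu_sym) \<noteq> \<infinity>" using lap_nu_sym[of 0] by simp
qed

lemma lap_symmetrize:
  fixes \<mu> :: "real measure"
  assumes "finite_measure \<mu>" and [measurable_cong]: "sets \<mu> = sets borel"
  shows "(\<integral>\<^sup>+x. ennreal (exp (x * t)) \<partial>symmetrize \<mu>) = (\<integral>\<^sup>+x. ennreal (exp (x * t)) \<partial>\<mu>) * (\<integral>\<^sup>+y. ennreal (exp (- (y * t))) \<partial>\<mu>)"
proof -
  have fr: "finite_measure (reflect_measure \<mu>)"
    unfolding reflect_measure_def using assms by (intro finite_measure.finite_measure_distr) auto
  have sr: "sets (reflect_measure \<mu>) = sets borel" by (simp add: reflect_measure_def)
  have "(\<integral>\<^sup>+x. ennreal (exp (x * t)) \<partial>symmetrize \<mu>) = (\<integral>\<^sup>+x. \<integral>\<^sup>+y. ennreal (exp ((x + y) * t)) \<partial>reflect_measure \<mu> \<partial>\<mu>)"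
    unfolding symmetrize_def using assms fr sr by (subst nn_integral_convolution) auto
  also have "\<dots> = (\<integral>\<^sup>+x. ennreal (exp (x * t)) * (\<integral>\<^sup>+y. ennreal (exp (- (y * t))) \<partial>\<mu>) \<partial>\<mu>)"
  proof (intro nn_integral_cong)
    fix x
    have "(\<integral>\<^sup>+y. ennreal (exp ((x + y) * t)) \<partial>reflect_measure \<mu>) = (\<integral>\<^sup>+y. ennreal (exp ((x + - y) * t)) \<partial>\<mu>)"
      unfolding reflect_measure_def by (subst nn_integral_distr) auto
    also have "\<dots> = (\<integral>\<^sup>+y. ennreal (exp (x * t)) * ennreal (exp (- (y * t))) \<partial>\<mu>)"
      by (intro nn_integral_cong) (simp add: ennreal_mult'[symmetric] mult_exp_exp algebra_simps)
    also have "\<dots> = ennreal (exp (x * t)) * (\<integral>\<^sup>+y. ennreal (exp (- (y * t))) \<partial>\<mu>)"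
      by (rule nn_integral_cmult) auto
    finally show "(\<integral>\<^sup>+y. ennreal (exp ((x + y) * t)) \<partial>reflect_measure \<mu>) = ennreal (exp (x * t)) * (\<integral>\<^sup>+y. ennreal (exp (- (y * t))) \<partial>\<mu>)" .
  qed
  also have "\<dots> = (\<integral>\<^sup>+x. ennreal (exp (x * t)) \<partial>\<mu>) * (\<integral>\<^sup>+y. ennreal (exp (- (y * t))) \<partial>\<mu>)"
    by (rule nn_integral_multc) auto
  finally show ?thesis .
qed



definition cc :: "real \<Rightarrow> real" where "cc t = - ln ((1 - t\<^sup>2)\<^sup>2)"

lemma log_laplace_le:
  assumes "(\<integral>\<^sup>+x. ennreal (exp (inner x y)) \<partial>\<mu>) \<le> ennreal K" "K > 0"
  shows "log_laplace \<mu> y \<le> ereal (ln K)"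
proof -
  let ?I = "(\<integral>\<^sup>+x. ennreal (exp (inner x y)) \<partial>\<mu>)"
  have "?I \<noteq> \<infinity>" using assms(1) by (auto simp: top_unique)
  show ?thesis
  proof (cases "?I = 0")
    case True then show ?thesis by (simp add: log_laplace_def ln_ennreal_def)
  next
    case False
    then have pos: "enn2real ?I > 0" using \<open>?I \<noteq> \<infinity>\<close> by (simp add: enn2real_positive_iff less_top zero_less_iff_neq_zero)
    have "enn2real ?I \<le> K" using assms by (simp add: enn2real_leI)
    then have "ln (enn2real ?I) \<le> ln K" using pos by simp
    then show ?thesis using False \<open>?I \<noteq> \<infinity>\<close> by (simp add: log_laplace_def ln_ennreal_def)
  qed
qed

lemma cramer_lower:
  fixes \<mu> :: "real measure"
  assumes "(\<integral>\<^sup>+x. ennreal (exp (x * t)) \<partial>\<mu>) \<le> ennreal (1 / (1 - t\<^sup>2)\<^sup>2)" "\<bar>t\<bar> < 1"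
  shows "ereal (z * t - cc t) \<le> cramer \<mu> z"
proof -
  have t2: "0 < 1 - t\<^sup>2" using assms(2) abs_square_less_1[of t] by simp
  have "log_laplace \<mu> t \<le> ereal (ln (1 / (1 - t\<^sup>2)\<^sup>2))"
    by (rule log_laplace_le) (use assms t2 in auto)
  also have "ln (1 / (1 - t\<^sup>2)\<^sup>2) = cc t" using t2 by (simp add: cc_def ln_div)
  finally have L: "log_laplace \<mu> t \<le> ereal (cc t)" .
  have "ereal (z * t - cc t) \<le> ereal (inner z t) - log_laplace \<mu> t"
    using L by (cases "log_laplace \<mu> t") auto
  also have "\<dots> \<le> cramer \<mu> z" unfolding cramer_def by (rule SUP_upper) simp
  finally show ?thesis .
qed

lemma cc_nonneg: "\<bar>t\<bar> < 1 \<Longrightarrow> 0 \<le> cc t"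
proof -
  assume "\<bar>t\<bar> < 1"
  then have t2: "0 < 1 - t\<^sup>2" "1 - t\<^sup>2 \<le> 1" using abs_square_less_1[of t] by auto
  then have "(1 - t\<^sup>2)\<^sup>2 \<le> 1" by (simp add: power_le_one)
  moreover have "0 < (1 - t\<^sup>2)\<^sup>2" using t2 by simp
  ultimately show ?thesis by (simp add: cc_def)
qed

lemma cc0: "cc 0 = 0" by (simp add: cc_def)

definition aa :: real where "aa = ln 10"
definition lam :: real where "lam = 5/6"
definition MM :: real where "MM = 10^14"
definition ff :: "real \<Rightarrow> real" where "ff y = min (lam * max (\<bar>y\<bar> - aa) 0) MM"

lemma ff_meas[measurable]: "ff \<in> borel_measurable borel"
  unfolding ff_def by measurable

lemma ff_bounded: "bounded (range ff)"
proof -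
  have "\<forall>y. norm (ff y) \<le> MM"
  proof
    fix y
    have "0 \<le> lam * max (\<bar>y\<bar> - aa) 0" by (simp add: lam_def)
    then show "norm (ff y) \<le> MM" by (simp add: ff_def MM_def)
  qed
  then show ?thesis by (auto simp: bounded_iff)
qed

lemma h_lower:
  fixes \<mu> :: "real measure"
  assumes L: "\<And>t. \<bar>t\<bar> < 1 \<Longrightarrow> (\<integral>\<^sup>+x. ennreal (exp (x * t)) \<partial>\<mu>) \<le> ennreal (1 / (1 - t\<^sup>2)\<^sup>2)"
  assumes t: "0 \<le> t" "t \<le> lam" and M: "t * (\<bar>x\<bar> - aa) - cc t \<le> MM"
  shows "ereal (t * (\<bar>x\<bar> - aa) - cc t) \<le> inf_conv (\<lambda>z. cramer \<mu> (z /\<^sub>R 1)) ff x"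
  unfolding inf_conv_def
proof (rule INF_greatest)
  fix y :: real
  have tl: "\<bar>t\<bar> < 1" using t by (simp add: lam_def)
  define \<sigma> where "\<sigma> = (if 0 \<le> x then t else - t)"
  have sl: "\<bar>\<sigma>\<bar> < 1" using tl by (simp add: \<sigma>_def)
  have s2: "\<sigma>\<^sup>2 = t\<^sup>2" by (simp add: \<sigma>_def)
  have W1: "ereal ((x - y) * \<sigma> - cc t) \<le> cramer \<mu> (x - y)"
    using cramer_lower[OF L[OF sl] sl, of "x - y"] s2 by (simp add: cc_def)
  have W0: "ereal 0 \<le> cramer \<mu> (x - y)"
    using cramer_lower[OF L[of 0], of "x - y"] by (simp add: cc0)
  have sx: "x * \<sigma> = t * \<bar>x\<bar>" "y * \<sigma> \<le> t * \<bar>y\<bar>" using t by (auto simp: \<sigma>_def abs_if mult_nonneg_nonpos)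
  have ccn: "0 \<le> cc t" using cc_nonneg[OF tl] .
  show "ereal (t * (\<bar>x\<bar> - aa) - cc t) \<le> cramer \<mu> ((x - y) /\<^sub>R 1) + ereal (ff y)"
  proof (cases "ff y = MM")
    case True
    have "ereal (t * (\<bar>x\<bar> - aa) - cc t) \<le> ereal 0 + ereal (ff y)" using True M by simp
    also have "\<dots> \<le> cramer \<mu> (x - y) + ereal (ff y)" by (rule add_right_mono[OF W0])
    finally show ?thesis by simp
  next
    case False
    then have fy: "ff y = lam * max (\<bar>y\<bar> - aa) 0" by (auto simp: ff_def min_def split: if_splits)
    have "t * (\<bar>y\<bar> - aa) \<le> t * max (\<bar>y\<bar> - aa) 0" using t by (intro mult_left_mono) auto
    also have "\<dots> \<le> lam * max (\<bar>y\<bar> - aa) 0" using t by (intro mult_right_mono) auto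
    finally have "t * (\<bar>y\<bar> - aa) \<le> ff y" using fy by simp
    then have "t * (\<bar>x\<bar> - aa) - cc t \<le> (x - y) * \<sigma> - cc t + ff y"
      using sx by (simp add: algebra_simps)
    then have "ereal (t * (\<bar>x\<bar> - aa) - cc t) \<le> ereal ((x - y) * \<sigma> - cc t) + ereal (ff y)" by simp
    also have "\<dots> \<le> cramer \<mu> (x - y) + ereal (ff y)" by (rule add_right_mono[OF W1])
    finally show ?thesis by simp
  qed
qed

lemma exp_ereal_ge: "ereal v \<le> z \<Longrightarrow> ennreal (exp v) \<le> exp_ereal z"
  by (cases z) (auto simp: exp_ereal_def)



lemma sum_ind_le:
  fixes b :: "nat \<Rightarrow> real" and g :: "nat \<Rightarrow> ennreal"
  assumes mono: "incseq b" and le: "\<And>i. i < n \<Longrightarrow> b i \<le> u \<Longrightarrow> u < b (Suc i) \<Longrightarrow> g i \<le> F"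
  shows "(\<Sum>i<n. g i * indicator {b i..<b (Suc i)} u) \<le> F"
  using le
proof (induction n)
  case 0 show ?case by simp
next
  case (Suc n)
  show ?case
  proof (cases "b n \<le> u")
    case True
    have "(\<Sum>i<n. g i * indicator {b i..<b (Suc i)} u) = 0"
    proof (intro sum.neutral ballI)
      fix i assume "i \<in> {..<n}"
      then have "b (Suc i) \<le> b n" using mono by (auto simp: incseq_def)
      then show "g i * indicator {b i..<b (Suc i)} u = 0" using True by (auto split: split_indicator)
    qed
    then show ?thesis using Suc.prems[of n] by (auto split: split_indicator)
  next
    case False
    then have "(\<Sum>i<Suc n. g i * indicator {b i..<b (Suc i)} u) = (\<Sum>i<n. g i * indicator {b i..<b (Suc i)} u)"
      by (simp split: split_indicator)
    also have "\<dots> \<le> F" using Suc by auto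
    finally show ?thesis .
  qed
qed

lemma piece_int:
  fixes \<mu> :: "real measure"
  assumes absint: "\<And>G. G \<in> borel_measurable borel \<Longrightarrow> (\<integral>\<^sup>+x. G \<bar>x\<bar> \<partial>\<mu>) = (\<integral>\<^sup>+u. ennreal (exp (- u)) * indicator {0..} u * G u \<partial>lborel)"
  assumes "0 \<le> p" "p \<le> q" "t < 1"
  shows "(\<integral>\<^sup>+x. ennreal (exp (t * (\<bar>x\<bar> - a) - c)) * indicator {p..<q} \<bar>x\<bar> \<partial>\<mu>) =
    ennreal ((exp (- t*a - c - (1-t)*p) - exp (- t*a - c - (1-t)*q))/(1-t))"
proof -
  have "(\<integral>\<^sup>+x. ennreal (exp (t * (\<bar>x\<bar> - a) - c)) * indicator {p..<q} \<bar>x\<bar> \<partial>\<mu>) =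
     (\<integral>\<^sup>+u. ennreal (exp (- u)) * indicator {0..} u * (ennreal (exp (t * (u - a) - c)) * indicator {p..<q} u) \<partial>lborel)"
    by (rule absint) measurable
  also have "\<dots> = (\<integral>\<^sup>+u. ennreal (exp ((- t*a - c) - (1-t)*u)) * indicator {p..<q} u \<partial>lborel)"
  proof (intro nn_integral_cong)
    fix u :: real
    have "ennreal (exp (- u)) * ennreal (exp (t * (u - a) - c)) = ennreal (exp ((- t*a - c) - (1-t)*u))"
      by (simp add: ennreal_mult'[symmetric] mult_exp_exp algebra_simps)
    then show "ennreal (exp (- u)) * indicator {0..} u * (ennreal (exp (t * (u - a) - c)) * indicator {p..<q} u) =
        ennreal (exp ((- t*a - c) - (1-t)*u)) * indicator {p..<q} u"
      using assms(2) by (auto split: split_indicator simp: mult.assoc[symmetric])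
  qed
  also have "\<dots> = ennreal ((exp (- t*a - c - (1-t)*p) - exp (- t*a - c - (1-t)*q))/(1-t))"
    using assms by (subst exp_piece_Ico) auto
  finally show ?thesis .
qed

lemma expval:
  fixes r E t :: real and k m n :: nat
  assumes "r > 0" "E > 0" "(1 - t) * real m = real n" "m > 0"
  shows "exp (- t * ln 10 - (- ln E) - (1 - t) * ln (10 * r ^ (k * m))) = E / (10 * r ^ (n * k))"
proof -
  have "(1 - t) * ln (10 * r ^ (k * m)) = (1 - t) * ln 10 + ((1 - t) * real m) * (real k * ln r)"
    using assms by (simp add: ln_mult ln_realpow algebra_simps)
  also have "\<dots> = (1 - t) * ln 10 + real (n * k) * ln r" using assms by simp
  finally have e: "- t * ln 10 - (- ln E) - (1 - t) * ln (10 * r ^ (k * m)) = ln E - ln 10 - real (n * k) * ln r"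
    by (simp add: algebra_simps)
  show ?thesis unfolding e using assms
    by (simp add: exp_diff ln_realpow[symmetric] del: of_nat_mult)
qed



definition tt :: "nat \<Rightarrow> real" where "tt i = 1 - 1 / real (Suc i)"
definition rr :: "nat \<Rightarrow> real" where
  "rr i = (if i = 1 then 7/4 else if i = 2 then 11/6 else if i = 3 then 8/5 else if i = 4 then 3/2 else 7/5)"
definition RR :: "nat \<Rightarrow> real" where "RR i = (if i \<le> 5 then rr i ^ (i * Suc i) else 100^6)"
definition bb :: "nat \<Rightarrow> real" where "bb i = (if i = 0 then 0 else ln (10 * RR i))"

lemma rr_pos: "rr i > 0" by (simp add: rr_def)

lemma RR_ge: "i \<ge> 1 \<Longrightarrow> RR i \<ge> 1"
  by (auto simp: RR_def rr_def)

lemma RR_mono: "1 \<le> i \<Longrightarrow> RR i \<le> RR (Suc i)"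
proof -
  assume "1 \<le> i"
  then consider "i = 1" | "i = 2" | "i = 3" | "i = 4" | "i = 5" | "i \<ge> 6" by linarith
  then show ?thesis by cases (simp_all add: RR_def rr_def power_divide)
qed

lemma bb_incseq: "incseq bb"
proof (rule incseq_SucI)
  fix i
  show "bb i \<le> bb (Suc i)"
  proof (cases "i = 0")
    case True then show ?thesis using RR_ge[of 1] by (simp add: bb_def)
  next
    case False
    then have "RR i \<le> RR (Suc i)" "1 \<le> RR i" using RR_mono RR_ge by auto
    then show ?thesis using False by (simp add: bb_def)
  qed
qed

lemma bb_nonneg: "0 \<le> bb i"
proof (cases "i = 0")
  case False
  then have "1 \<le> 10 * RR i" using RR_ge[of i] by simp
  then show ?thesis using False by (simp add: bb_def)
qed (simp add: bb_def)

lemma bb6: "i \<le> 6 \<Longrightarrow> bb i < MM"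
proof -
  assume "i \<le> 6"
  then have "bb i \<le> bb 6" using bb_incseq by (simp add: incseq_def)
  also have "bb 6 = ln (10 * 100^6)" by (simp add: bb_def RR_def)
  also have "\<dots> < 10 * 100^6" by (rule ln_less_self) simp
  also have "\<dots> < MM" by (simp add: MM_def)
  finally show ?thesis .
qed

lemma tt_props: "i < 6 \<Longrightarrow> 0 \<le> tt i \<and> tt i \<le> lam \<and> tt i < 1"
  by (auto simp: tt_def lam_def field_simps)

definition EE :: "nat \<Rightarrow> real" where "EE i = (1 - (tt i)\<^sup>2)\<^sup>2"

lemma EE_pos: "i < 6 \<Longrightarrow> EE i > 0"
proof -
  assume "i < 6"
  then have "\<bar>tt i\<bar> < 1" using tt_props[of i] by auto
  then have "0 < 1 - (tt i)\<^sup>2" using abs_square_less_1 by auto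
  then show ?thesis by (simp add: EE_def)
qed

lemma cc_tt: "cc (tt i) = - ln (EE i)" by (simp add: cc_def EE_def)

lemma one_minus_tt: "(1 - tt i) * real (Suc i) = real 1"
  by (simp add: tt_def field_simps)

lemma VL:
  assumes "1 \<le> i" "i \<le> 5"
  shows "exp (- tt i * aa - cc (tt i) - (1 - tt i) * bb i) = EE i / (10 * rr i ^ (1 * i))"
proof -
  have "bb i = ln (10 * rr i ^ (i * Suc i))" using assms by (simp add: bb_def RR_def)
  then show ?thesis unfolding cc_tt aa_def
    using expval[of "rr i" "EE i" "tt i" "Suc i" 1 i, OF rr_pos EE_pos one_minus_tt] assms by simp
qed

lemma VH:
  assumes "i \<le> 4"
  shows "exp (- tt i * aa - cc (tt i) - (1 - tt i) * bb (Suc i)) = EE i / (10 * rr (Suc i) ^ (1 * Suc (Suc i)))"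
proof -
  have "bb (Suc i) = ln (10 * rr (Suc i) ^ (Suc (Suc i) * Suc i))" using assms by (simp add: bb_def RR_def mult.commute)
  then show ?thesis unfolding cc_tt aa_def
    using expval[of "rr (Suc i)" "EE i" "tt i" "Suc i" 1 "Suc (Suc i)", OF rr_pos EE_pos one_minus_tt] assms by simp
qed

lemma VH5: "exp (- tt 5 * aa - cc (tt 5) - (1 - tt 5) * bb 6) = EE 5 / (10 * 100 ^ (1 * 1))"
proof -
  have "bb 6 = ln (10 * 100 ^ (1 * Suc 5))" by (simp add: bb_def RR_def)
  then show ?thesis unfolding cc_tt aa_def
    using expval[of 100 "EE 5" "tt 5" "Suc 5" 1 1, OF _ EE_pos one_minus_tt] by simp
qed

lemma VL0: "exp (- tt 0 * aa - cc (tt 0) - (1 - tt 0) * bb 0) = 1"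
  by (simp add: tt_def bb_def cc0)



definition DA :: "nat \<Rightarrow> real" where
  "DA i = (exp (- tt i * aa - cc (tt i) - (1 - tt i) * bb i) - exp (- tt i * aa - cc (tt i) - (1 - tt i) * bb (Suc i))) / (1 - tt i)"

lemma DA_nonneg: "i < 6 \<Longrightarrow> 0 \<le> DA i"
proof -
  assume i: "i < 6"
  then have t: "tt i < 1" using tt_props by auto
  have "bb i \<le> bb (Suc i)" using bb_incseq by (simp add: incseq_SucD)
  then have "(1 - tt i) * bb i \<le> (1 - tt i) * bb (Suc i)" using t by (intro mult_left_mono) auto
  then show ?thesis using t unfolding DA_def by (intro divide_nonneg_pos) auto
qed

lemma DA_sum: "(\<Sum>i<6. DA i) = 1635671815787308601 / 1558592266936320000"
proof -
  have "(\<Sum>i<6. DA i) = DA 0 + DA 1 + DA 2 + DA 3 + DA 4 + DA 5"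
    by (simp add: eval_nat_numeral)
  also have "DA 0 = (1 - EE 0 / (10 * rr 1 ^ (1 * 2))) / (1 - tt 0)"
    unfolding DA_def using VL0 VH[of 0] by (simp add: numeral_2_eq_2)
  also have "DA 1 = (EE 1 / (10 * rr 1 ^ (1 * 1)) - EE 1 / (10 * rr 2 ^ (1 * 3))) / (1 - tt 1)"
    unfolding DA_def using VL[of 1] VH[of 1] by (simp add: numeral_2_eq_2 numeral_3_eq_3)
  also have "DA 2 = (EE 2 / (10 * rr 2 ^ (1 * 2)) - EE 2 / (10 * rr 3 ^ (1 * 4))) / (1 - tt 2)"
    unfolding DA_def using VL[of 2] VH[of 2] by (simp add: eval_nat_numeral)
  also have "DA 3 = (EE 3 / (10 * rr 3 ^ (1 * 3)) - EE 3 / (10 * rr 4 ^ (1 * 5))) / (1 - tt 3)"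
    unfolding DA_def using VL[of 3] VH[of 3] by (simp add: eval_nat_numeral)
  also have "DA 4 = (EE 4 / (10 * rr 4 ^ (1 * 4)) - EE 4 / (10 * rr 5 ^ (1 * 6))) / (1 - tt 4)"
    unfolding DA_def using VL[of 4] VH[of 4] by (simp add: eval_nat_numeral)
  also have "DA 5 = (EE 5 / (10 * rr 5 ^ (1 * 5)) - EE 5 / (10 * 100 ^ (1 * 1))) / (1 - tt 5)"
    unfolding DA_def using VL[of 5] VH5 by (simp add: eval_nat_numeral)
  finally show ?thesis by (simp add: EE_def tt_def rr_def power_divide)
qed



definition t2 :: "nat \<Rightarrow> real" where "t2 i = (if i = 0 then 0 else - 5/6)"
definition b2 :: "nat \<Rightarrow> real" where "b2 i = (if i = 0 then 0 else if i = 1 then aa else ln (10 * 1000 ^ 6))"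

lemma b2_incseq: "incseq b2"
proof (rule incseq_SucI)
  fix i
  have "aa \<le> ln (10 * 1000 ^ 6)" by (simp add: aa_def)
  moreover have "0 \<le> aa" by (simp add: aa_def)
  ultimately show "b2 i \<le> b2 (Suc i)" by (simp add: b2_def)
qed

lemma ptB: "(\<Sum>i<2. ennreal (exp (t2 i * (\<bar>x\<bar> - aa) - 0)) * indicator {b2 i..<b2 (Suc i)} \<bar>x\<bar>) \<le> ennreal (exp (- ff x))"
proof (rule sum_ind_le[OF b2_incseq])
  fix i :: nat assume i: "i < 2" "b2 i \<le> \<bar>x\<bar>" "\<bar>x\<bar> < b2 (Suc i)"
  show "ennreal (exp (t2 i * (\<bar>x\<bar> - aa) - 0)) \<le> ennreal (exp (- ff x))"
  proof (cases "i = 0")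
    case True
    then have "\<bar>x\<bar> < aa" using i by (simp add: b2_def)
    then have "ff x = 0" by (simp add: ff_def MM_def)
    then show ?thesis using True by (simp add: t2_def)
  next
    case False
    then have "aa \<le> \<bar>x\<bar>" "i = 1" using i by (auto simp: b2_def)
    have "ff x \<le> lam * max (\<bar>x\<bar> - aa) 0" by (simp add: ff_def)
    then have "ff x \<le> 5/6 * (\<bar>x\<bar> - aa)" using \<open>aa \<le> \<bar>x\<bar>\<close> by (simp add: lam_def)
    then show ?thesis using \<open>i = 1\<close> by (simp add: t2_def)
  qed
qed

lemma intB:
  fixes \<mu> :: "real measure"
  assumes absint: "\<And>G. G \<in> borel_measurable borel \<Longrightarrow> (\<integral>\<^sup>+x. G \<bar>x\<bar> \<partial>\<mu>) = (\<integral>\<^sup>+u. ennreal (exp (- u)) * indicator {0..} u * G u \<partial>lborel)"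
  assumes [measurable_cong]: "sets \<mu> = sets borel"
  shows "ennreal (9/10 + (1/10 - 1 / (10 * 1000^11)) / (11/6)) \<le> (\<integral>\<^sup>+x. ennreal (exp (- ff x)) \<partial>\<mu>)"
proof -
  have "(\<integral>\<^sup>+x. (\<Sum>i<2. ennreal (exp (t2 i * (\<bar>x\<bar> - aa) - 0)) * indicator {b2 i..<b2 (Suc i)} \<bar>x\<bar>) \<partial>\<mu>) =
      (\<Sum>i<2. \<integral>\<^sup>+x. ennreal (exp (t2 i * (\<bar>x\<bar> - aa) - 0)) * indicator {b2 i..<b2 (Suc i)} \<bar>x\<bar> \<partial>\<mu>)"
    by (rule nn_integral_sum) measurable
  also have "\<dots> = (\<integral>\<^sup>+x. ennreal (exp (t2 0 * (\<bar>x\<bar> - aa) - 0)) * indicator {b2 0..<b2 1} \<bar>x\<bar> \<partial>\<mu>) +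
      (\<integral>\<^sup>+x. ennreal (exp (t2 1 * (\<bar>x\<bar> - aa) - 0)) * indicator {b2 1..<b2 2} \<bar>x\<bar> \<partial>\<mu>)"
    by (simp add: numeral_2_eq_2)
  also have "\<dots> = ennreal ((exp (- t2 0*aa - 0 - (1-t2 0)*b2 0) - exp (- t2 0*aa - 0 - (1-t2 0)*b2 1))/(1-t2 0)) +
     ennreal ((exp (- t2 1*aa - 0 - (1-t2 1)*b2 1) - exp (- t2 1*aa - 0 - (1-t2 1)*b2 2))/(1-t2 1))"
    using b2_incseq by (subst (1 2) piece_int[OF absint]) (auto simp: t2_def b2_def aa_def incseq_def)
  also have "exp (- t2 0*aa - 0 - (1-t2 0)*b2 0) = 1" by (simp add: t2_def b2_def)
  also have "exp (- t2 0*aa - 0 - (1-t2 0)*b2 1) = 1/10" by (simp add: t2_def b2_def aa_def exp_minus)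
  also have "exp (- t2 1*aa - 0 - (1-t2 1)*b2 1) = 1/10"
  proof -
    have "- t2 1*aa - 0 - (1-t2 1)*b2 1 = - ln 10" by (simp add: t2_def b2_def aa_def)
    then show ?thesis by (simp add: exp_minus)
  qed
  also have "exp (- t2 1*aa - 0 - (1-t2 1)*b2 2) = 1 / (10 * 1000^11)"
  proof -
    have "exp (- (-5/6) * ln 10 - (- ln 1) - (1 - (-5/6)) * ln (10 * 1000 ^ (1 * 6))) = (1::real) / (10 * 1000 ^ (11 * 1))"
      by (rule expval) auto
    then show ?thesis by (simp add: t2_def b2_def aa_def)
  qed
  also have "ennreal ((1 - 1/10) / (1 - t2 0)) + ennreal ((1/10 - 1 / (10 * 1000^11)) / (1 - t2 1)) =
      ennreal (9/10 + (1/10 - 1 / (10 * 1000^11)) / (11/6))"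
    by (simp add: t2_def ennreal_plus[symmetric] del: ennreal_plus)
  finally have eq: "(\<integral>\<^sup>+x. (\<Sum>i<2. ennreal (exp (t2 i * (\<bar>x\<bar> - aa) - 0)) * indicator {b2 i..<b2 (Suc i)} \<bar>x\<bar>) \<partial>\<mu>) =
      ennreal (9/10 + (1/10 - 1 / (10 * 1000^11)) / (11/6))" .
  have "(\<integral>\<^sup>+x. (\<Sum>i<2. ennreal (exp (t2 i * (\<bar>x\<bar> - aa) - 0)) * indicator {b2 i..<b2 (Suc i)} \<bar>x\<bar>) \<partial>\<mu>) \<le> (\<integral>\<^sup>+x. ennreal (exp (- ff x)) \<partial>\<mu>)"
    by (rule nn_integral_mono) (rule ptB)
  then show ?thesis using eq by simp
qed



lemma intA:
  fixes \<mu> :: "real measure"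
  assumes absint: "\<And>G. G \<in> borel_measurable borel \<Longrightarrow> (\<integral>\<^sup>+x. G \<bar>x\<bar> \<partial>\<mu>) = (\<integral>\<^sup>+u. ennreal (exp (- u)) * indicator {0..} u * G u \<partial>lborel)"
  assumes [measurable_cong]: "sets \<mu> = sets borel"
  assumes L: "\<And>t. \<bar>t\<bar> < 1 \<Longrightarrow> (\<integral>\<^sup>+x. ennreal (exp (x * t)) \<partial>\<mu>') \<le> ennreal (1 / (1 - t\<^sup>2)\<^sup>2)"
  shows "ennreal (1635671815787308601 / 1558592266936320000) \<le> (\<integral>\<^sup>+x. exp_ereal (inf_conv (\<lambda>z. cramer \<mu>' (z /\<^sub>R 1)) ff x) \<partial>\<mu>)"
proof -
  let ?g = "\<lambda>i x. ennreal (exp (tt i * (\<bar>x\<bar> - aa) - cc (tt i))) * indicator {bb i..<bb (Suc i)} \<bar>x\<bar>"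
  have "(\<integral>\<^sup>+x. (\<Sum>i<6. ?g i x) \<partial>\<mu>) = (\<Sum>i<6. \<integral>\<^sup>+x. ?g i x \<partial>\<mu>)"
    by (rule nn_integral_sum) measurable
  also have "\<dots> = (\<Sum>i<6. ennreal (DA i))"
  proof (rule sum.cong)
    fix i assume "i \<in> {..<6::nat}"
    then have t: "tt i < 1" using tt_props by auto
    show "(\<integral>\<^sup>+x. ?g i x \<partial>\<mu>) = ennreal (DA i)"
      unfolding DA_def
      by (rule piece_int[OF absint]) (use t bb_nonneg bb_incseq in \<open>auto simp: incseq_SucD\<close>)
  qed simp
  also have "\<dots> = ennreal (\<Sum>i<6. DA i)" by (rule sum_ennreal) (use DA_nonneg in auto)
  also have "\<dots> = ennreal (1635671815787308601 / 1558592266936320000)" by (simp only: DA_sum)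
  finally have eq: "(\<integral>\<^sup>+x. (\<Sum>i<6. ?g i x) \<partial>\<mu>) = ennreal (1635671815787308601 / 1558592266936320000)" .
  have "(\<integral>\<^sup>+x. (\<Sum>i<6. ?g i x) \<partial>\<mu>) \<le> (\<integral>\<^sup>+x. exp_ereal (inf_conv (\<lambda>z. cramer \<mu>' (z /\<^sub>R 1)) ff x) \<partial>\<mu>)"
  proof (rule nn_integral_mono)
    fix x
    show "(\<Sum>i<6. ?g i x) \<le> exp_ereal (inf_conv (\<lambda>z. cramer \<mu>' (z /\<^sub>R 1)) ff x)"
    proof (rule sum_ind_le[OF bb_incseq])
      fix i :: nat assume i: "i < 6" "bb i \<le> \<bar>x\<bar>" "\<bar>x\<bar> < bb (Suc i)"
      have tp: "0 \<le> tt i" "tt i \<le> lam" "tt i < 1" using tt_props[OF i(1)] by auto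
      have "0 \<le> cc (tt i)" using cc_nonneg[of "tt i"] tp by auto
      moreover have "tt i * (\<bar>x\<bar> - aa) \<le> \<bar>x\<bar>"
      proof (cases "aa \<le> \<bar>x\<bar>")
        case True
        then have "tt i * (\<bar>x\<bar> - aa) \<le> 1 * (\<bar>x\<bar> - aa)" using tp by (intro mult_right_mono) auto
        moreover have "0 \<le> aa" by (simp add: aa_def)
        ultimately show ?thesis by simp
      next
        case False
        then have "tt i * (\<bar>x\<bar> - aa) \<le> 0" using tp by (intro mult_nonneg_nonpos) auto
        then show ?thesis by simp
      qed
      moreover have "\<bar>x\<bar> < MM" using i(3) bb6[of "Suc i"] i(1) by auto
      ultimately have M: "tt i * (\<bar>x\<bar> - aa) - cc (tt i) \<le> MM" by linarith
      show "ennreal (exp (tt i * (\<bar>x\<bar> - aa) - cc (tt i))) \<le> exp_ereal (inf_conv (\<lambda>z. cramer \<mu>' (z /\<^sub>R 1)) ff x)"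
        by (rule exp_ereal_ge, rule h_lower[OF L tp(1,2) M])
    qed
  qed
  then show ?thesis using eq by simp
qed

lemma not_IC_generic:
  fixes \<mu> :: "real measure"
  assumes absint: "\<And>G. G \<in> borel_measurable borel \<Longrightarrow> (\<integral>\<^sup>+x. G \<bar>x\<bar> \<partial>\<mu>) = (\<integral>\<^sup>+u. ennreal (exp (- u)) * indicator {0..} u * G u \<partial>lborel)"
  assumes sets: "sets \<mu> = sets borel"
  assumes L: "\<And>t. \<bar>t\<bar> < 1 \<Longrightarrow> (\<integral>\<^sup>+x. ennreal (exp (x * t)) \<partial>symmetrize \<mu>) \<le> ennreal (1 / (1 - t\<^sup>2)\<^sup>2)"
  shows "\<not> IC \<mu> 1"
proof
  assume "IC \<mu> 1"
  then have tau: "(\<integral>\<^sup>+x. exp_ereal (inf_conv (\<lambda>z. cramer (symmetrize \<mu>) (z /\<^sub>R 1)) ff x) \<partial>\<mu>) * (\<integral>\<^sup>+x. ennreal (exp (- ff x)) \<partial>\<mu>) \<le> 1"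
    unfolding IC_def property_tau_def using ff_meas ff_bounded by blast
  have A: "ennreal (1635671815787308601 / 1558592266936320000) \<le> (\<integral>\<^sup>+x. exp_ereal (inf_conv (\<lambda>z. cramer (symmetrize \<mu>) (z /\<^sub>R 1)) ff x) \<partial>\<mu>)"
    by (rule intA[OF absint sets L])
  have B: "ennreal (9/10 + (1/10 - 1 / (10 * 1000^11)) / (11/6)) \<le> (\<integral>\<^sup>+x. ennreal (exp (- ff x)) \<partial>\<mu>)"
    by (rule intB[OF absint sets])
  have "ennreal (1635671815787308601 / 1558592266936320000) * ennreal (9/10 + (1/10 - 1 / (10 * 1000^11)) / (11/6)) \<le> 1"
    using mult_mono[OF A B] tau by (auto intro: order_trans)
  then have "ennreal (1635671815787308601 / 1558592266936320000 * (9/10 + (1/10 - 1 / (10 * 1000^11)) / (11/6))) \<le> 1"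
    by (simp add: ennreal_mult'[symmetric])
  then show False by (simp add: ennreal_le_1)
qed

theorem theorem3:
  shows "\<not> IC nu_plus 1 \<and> \<not> IC nu_sym 1"
proof
  show "\<not> IC nu_plus 1"
  proof (rule not_IC_generic[OF nu_plus_abs sets_nu_plus])
    fix t :: real assume t: "\<bar>t\<bar> < 1"
    have t2: "0 < 1 - t\<^sup>2" "1 - t\<^sup>2 \<le> 1" using t abs_square_less_1[of t] by auto
    have "(\<integral>\<^sup>+x. ennreal (exp (x * t)) \<partial>symmetrize nu_plus) = ennreal (1 / (1 - t)) * ennreal (1 / (1 - - t))"
      using t lap_nu_plus[of t] lap_nu_plus[of "- t"]
      by (subst lap_symmetrize[OF finite_nu_plus sets_nu_plus]) auto
    also have "\<dots> = ennreal (1 / (1 - t\<^sup>2))"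
      using t by (simp add: ennreal_mult'[symmetric] power2_eq_square algebra_simps)
    also have "\<dots> \<le> ennreal (1 / (1 - t\<^sup>2)\<^sup>2)"
    proof (rule ennreal_leI)
      have "(1 - t\<^sup>2)\<^sup>2 \<le> 1 - t\<^sup>2" using t2 by (simp add: power2_eq_square mult_left_le_one_le)
      then show "1 / (1 - t\<^sup>2) \<le> 1 / (1 - t\<^sup>2)\<^sup>2" using t2 by (intro divide_left_mono) auto
    qed
    finally show "(\<integral>\<^sup>+x. ennreal (exp (x * t)) \<partial>symmetrize nu_plus) \<le> ennreal (1 / (1 - t\<^sup>2)\<^sup>2)" .
  qed measurable
  show "\<not> IC nu_sym 1"
  proof (rule not_IC_generic[OF nu_sym_abs sets_nu_sym])
    fix t :: real assume t: "\<bar>t\<bar> < 1"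
    have t2: "0 < 1 - t\<^sup>2" using t abs_square_less_1[of t] by auto
    have "(\<integral>\<^sup>+x. ennreal (exp (x * t)) \<partial>symmetrize nu_sym) = ennreal (1 / (1 - t\<^sup>2)) * ennreal (1 / (1 - (- t)\<^sup>2))"
      using t lap_nu_sym[of t] lap_nu_sym[of "- t"]
      by (subst lap_symmetrize[OF finite_nu_sym sets_nu_sym]) auto
    also have "\<dots> = ennreal (1 / (1 - t\<^sup>2)\<^sup>2)"
      using t2 by (simp add: ennreal_mult'[symmetric] power2_eq_square)
    finally show "(\<integral>\<^sup>+x. ennreal (exp (x * t)) \<partial>symmetrize nu_sym) \<le> ennreal (1 / (1 - t\<^sup>2)\<^sup>2)" by simp
  qed measurable
qed

end
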